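(* Let $n,m_1,m_2\ge1$ be integers, $r>0$, $D\subseteq\mathbb{R}^{m_1}$ a compact set, $U\subseteq\mathbb{R}^{m_2}$ a locally compact set with $0\in U$, and $W=D\times U$. Let $f:L^\infty([-r,0);\mathbb{R}^n)\times L^\infty([-r,0];D)\times L^\infty([-r,0];U)\to\mathbb{R}^n$ (written $f(x,d,u)$, with $w=(d,u)$) satisfy: (H1) there exist non-decreasing functions $a,M,N:\mathbb{R}_+\to\mathbb{R}_+$ such that for every $R>0$ and all $x,y\in L^\infty([-r,0);\mathbb{R}^n)$, $w\in L^\infty([-r,0];W)$ with $\|x\|,\|y\|,\|w\|\le R$: $|f(x,w)-f(y,w)|\le N(R)h\sup_{-h\le s<0}|x(s)-y(s)|+M(R)\sup_{-r\le s<-h}|x(s)-y(s)|$ for all $h\in(0,r)$, and $|f(x,w)|\le a(R)$; (H2) for every $\delta>0$, $x\in L^\infty([-r,\delta);\mathbb{R}^n)$, $w\in L^\infty([-r,\delta];W)$, the function $z$ on $[-r,\delta)$ defined by $z(t)=x(t)$ for a.e. $t\in[-r,0)$ and $z(t)=f(x_t,w_t)$ for a.e. $t\in[0,\delta)$ belongs to $L^\infty([-r,\delta);\mathbb{R}^n)$; (H3) there exists $b\in K_\infty$ such that $|f(x,d,u)|\le b\left(\max\left(\|x\|,\sup_{-r\le s\le0}|u(s)|\right)\right)$ for all $x\in L^\infty([-r,0);\mathbb{R}^n)$, $d\in L^\infty([-r,0];D)$, $u\in L^\infty([-r,0];U)$. Then $0\in L^\infty([-r,0);\mathbb{R}^n)$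 is a robust equilibrium point for the system $x(t)=f(x_t,d_t,u_t)$ with input $u$, i.e., for all $\varepsilon>0$ and $T\ge0$ there exists $\delta=\delta(\varepsilon,T)>0$ such that for every $x_0\in L^\infty([-r,0);\mathbb{R}^n)$, $d\in L^\infty([-r,+\infty);D)$, $u\in L^\infty_{loc}([-r,+\infty);U)$ with $\|x_0\|+\sup_{t\ge0}\|u_t\|<\delta$, there exist $t_{\max}=t_{\max}(x_0,d,u)\in(T,+\infty]$ and a unique mapping $x\in L^\infty_{loc}([-r,t_{\max});\mathbb{R}^n)$ satisfying $x(t)=f(x_t,d_t,u_t)$ for a.e. $t\in[0,t_{\max})$, $x(t)=x_0(t)$ for a.e. $t\in[-r,0)$, and $\|x_t\|<\varepsilon$ for all $t\in[0,T]$.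
   Context: $\mathbb{R}_+=[0,+\infty)$. $L^\infty(I;S)$: measurable essentially bounded functions on the interval $I$ with values in $S$; $L^\infty_{loc}$: essentially bounded on compact subintervals. For $x\in L^\infty(I;\mathbb{R}^k)$, $\|x\|$ is the essential supremum of the Euclidean norm $|x|$, and $\sup_{a\le s<b}|x(s)|$ means essential supremum over $[a,b)$. For $x$ defined on $[-r,T)$ and $t\in[0,T)$, $x_t(s)=x(t+s)$ for $s\in[-r,0)$; for inputs defined on $[-r,+\infty)$, $d_t(s)=d(t+s)$, $u_t(s)=u(t+s)$, $s\in[-r,0]$. $K_\infty$ is the class of continuous strictly increasing functions $b:\mathbb{R}_+\to\mathbb{R}_+$ with $b(0)=0$ and $b(s)\to\infty$ as $s\to\infty$. *)

theory Defs
  imports "HOL-Analysis.Analysis" "HOL-Probability.Essential_Supremum"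
begin

definition ess_norm :: "real set \<Rightarrow> (real \<Rightarrow> 'a::real_normed_vector) \<Rightarrow> ereal" where
  "ess_norm I g = esssup (lebesgue_on I) (\<lambda>t. ereal (norm (g t)))"

definition Linf :: "real set \<Rightarrow> 'a::euclidean_space set \<Rightarrow> (real \<Rightarrow> 'a) \<Rightarrow> bool" where
  "Linf I S g \<longleftrightarrow> g \<in> borel_measurable (lebesgue_on I)
      \<and> (AE t in lebesgue_on I. g t \<in> S) \<and> ess_norm I g < \<infinity>"

definition Linf_loc :: "real set \<Rightarrow> 'a::euclidean_space set \<Rightarrow> (real \<Rightarrow> 'a) \<Rightarrow> bool" where
  "Linf_loc I S g \<longleftrightarrow> g \<in> borel_measurable (lebesgue_on I)
      \<and> (AE t in lebesgue_on I. g t \<in> S)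
      \<and> (\<forall>a b. {a..b} \<subseteq> I \<longrightarrow> ess_norm {a..b} g < \<infinity>)"

definition ae_eq :: "real set \<Rightarrow> (real \<Rightarrow> 'a) \<Rightarrow> (real \<Rightarrow> 'a) \<Rightarrow> bool" where
  "ae_eq I g h \<longleftrightarrow> (AE t in lebesgue_on I. g t = h t)"

definition shift :: "(real \<Rightarrow> 'a) \<Rightarrow> real \<Rightarrow> real \<Rightarrow> 'a" where
  "shift g t = (\<lambda>s. g (t + s))"

definition K_inf :: "(real \<Rightarrow> real) \<Rightarrow> bool" where
  "K_inf b \<longleftrightarrow> continuous_on {0..} b \<and> strict_mono_on {0..} b \<and> b 0 = 0
      \<and> filterlim b at_top at_top"

end

theory Submission
  imports Defs
begin

lemma AE_leb_on_iff:
  assumes "S \<in> sets lebesgue"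
  shows "(AE x in lebesgue_on S. P x) \<longleftrightarrow> (\<exists>N. negligible N \<and> (\<forall>x\<in>S. x \<notin> N \<longrightarrow> P x))"
proof -
  have "(AE x in lebesgue_on S. P x) \<longleftrightarrow> (AE x in lebesgue. x \<in> S \<longrightarrow> P x)"
    using assms by (subst AE_restrict_space_iff) auto
  also have "\<dots> \<longleftrightarrow> (\<exists>N\<in>null_sets lebesgue. {x. \<not> (x \<in> S \<longrightarrow> P x)} \<subseteq> N)"
    unfolding eventually_ae_filter by simp
  also have "\<dots> \<longleftrightarrow> (\<exists>N. negligible N \<and> (\<forall>x\<in>S. x \<notin> N \<longrightarrow> P x))"
    by (auto simp: negligible_iff_null_sets)
  finally show ?thesis .
qed

lemma transl_meas: "(\<lambda>s::real. t + s) \<in> lebesgue \<rightarrow>\<^sub>M lebesgue"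
  using lebesgue_affine_measurable[where c="\<lambda>_. 1" and t=t] by simp

lemma AE_shift:
  fixes A B :: "real set"
  assumes "A \<in> sets lebesgue" "B \<in> sets lebesgue" "AE x in lebesgue_on A. Q x"
  shows "AE s in lebesgue_on B. t + s \<in> A \<longrightarrow> Q (t + s)"
proof -
  obtain N where N: "negligible N" "\<forall>x\<in>A. x \<notin> N \<longrightarrow> Q x"
    using assms(3) AE_leb_on_iff[OF assms(1)] by blast
  have "negligible ((+) (-t) ` N)" using N(1) negligible_translation by blast
  moreover have "\<forall>s\<in>B. s \<notin> (+) (-t) ` N \<longrightarrow> t + s \<in> A \<longrightarrow> Q (t + s)"
  proof (intro ballI impI)
    fix s assume "s \<notin> (+) (-t) ` N" "t + s \<in> A"
    then have "t + s \<notin> N" by (metis add_minus_cancel image_eqI)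
    then show "Q (t + s)" using N(2) \<open>t + s \<in> A\<close> by blast
  qed
  ultimately show ?thesis using AE_leb_on_iff[OF assms(2)] by blast
qed

lemma AE_sub:
  assumes "A \<in> sets lebesgue" "B \<in> sets lebesgue" "AE x in lebesgue_on B. P x"
  shows "AE x in lebesgue_on A. x \<in> B \<longrightarrow> P x"
proof -
  obtain N where "negligible N" "\<forall>x\<in>B. x \<notin> N \<longrightarrow> P x"
    using assms(3) AE_leb_on_iff[OF assms(2)] by blast
  then show ?thesis using AE_leb_on_iff[OF assms(1)] by blast
qed

lemma AE_mono_set:
  assumes "A \<in> sets lebesgue" "B \<in> sets lebesgue" "AE x in lebesgue_on A. P x" "B \<subseteq> A"
  shows "AE x in lebesgue_on B. P x"
proof -
  obtain N where "negligible N" "\<forall>x\<in>A. x \<notin> N \<longrightarrow> P x"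
    using assms(3) AE_leb_on_iff[OF assms(1)] by blast
  then show ?thesis using AE_leb_on_iff[OF assms(2)] assms(4) by blast
qed

lemma AE_glue:
  assumes "A \<in> sets lebesgue" "B \<in> sets lebesgue" "AE x in lebesgue_on B. P x"
    "\<And>x. x \<in> A \<Longrightarrow> x \<notin> B \<Longrightarrow> P x"
  shows "AE x in lebesgue_on A. P x"
proof -
  obtain N where "negligible N" "\<forall>x\<in>B. x \<notin> N \<longrightarrow> P x"
    using assms(3) AE_leb_on_iff[OF assms(2)] by blast
  then show ?thesis using AE_leb_on_iff[OF assms(1)] assms(4) by blast
qed

lemma meas_shift:
  fixes g :: "real \<Rightarrow> 'a::euclidean_space"
  assumes "A \<in> sets lebesgue" "B \<in> sets lebesgue" "g \<in> borel_measurable (lebesgue_on A)"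
    "\<And>s. s \<in> B \<Longrightarrow> t + s \<in> A"
  shows "(\<lambda>s. g (t + s)) \<in> borel_measurable (lebesgue_on B)"
proof -
  have "(\<lambda>x. if x \<in> A then g x else 0) \<in> borel_measurable lebesgue"
    using borel_measurable_if assms(1,3) by blast
  then have "(\<lambda>s. (\<lambda>x. if x \<in> A then g x else 0) (t + s)) \<in> borel_measurable lebesgue"
    using measurable_compose[OF transl_meas] by blast
  then have "(\<lambda>s. (\<lambda>x. if x \<in> A then g x else 0) (t + s)) \<in> borel_measurable (lebesgue_on B)"
    by (simp add: measurable_restrict_space1)
  then show ?thesis
    by (rule measurable_cong[THEN iffD1, rotated]) (use assms(4) in auto)
qed

lemma ereal_le_fin: "(e::ereal) \<le> ereal c \<Longrightarrow> e < \<infinity>"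
  by (cases e) auto

lemma AE_in: "AE x in lebesgue_on A. x \<in> A"
  by (rule AE_I2) auto

lemma ess_le:
  fixes g :: "real \<Rightarrow> 'a::real_normed_vector"
  assumes "g \<in> borel_measurable (lebesgue_on I)" "AE t in lebesgue_on I. norm (g t) \<le> c"
  shows "ess_norm I g \<le> ereal c"
  unfolding ess_norm_def
  by (rule esssup_I) (use assms in auto)

lemma ess_AE: "AE t in lebesgue_on I. ereal (norm (g t)) \<le> ess_norm I g"
  unfolding ess_norm_def by (rule esssup_AE)

lemma ess_AE_le:
  assumes "ess_norm I g \<le> ereal c"
  shows "AE t in lebesgue_on I. norm (g t) \<le> c"
  using ess_AE[where I=I and g=g] by eventually_elim (use assms in \<open>auto dest: order.trans\<close>)

lemma ess_fin_bnd:
  assumes "ess_norm I g < \<infinity>"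
  obtains c where "c \<ge> 0" "AE t in lebesgue_on I. norm (g t) \<le> c"
proof -
  have "ess_norm I g \<le> ereal (max 0 (real_of_ereal (ess_norm I g)))"
    using assms by (cases "ess_norm I g") auto
  then have "AE t in lebesgue_on I. norm (g t) \<le> max 0 (real_of_ereal (ess_norm I g))"
    by (rule ess_AE_le)
  then show ?thesis using that[of "max 0 (real_of_ereal (ess_norm I g))"] by simp
qed

lemma ess_nonneg:
  assumes "I \<in> sets lebesgue" "emeasure lebesgue I \<noteq> 0"
  shows "0 \<le> ess_norm I g"
proof -
  have "esssup (lebesgue_on I) (\<lambda>t. ereal 0) \<le> esssup (lebesgue_on I) (\<lambda>t. ereal (norm (g t)))"
    by (rule esssup_mono) auto
  moreover have "esssup (lebesgue_on I) (\<lambda>t. ereal 0) = 0"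
    using assms by (subst esssup_const) (auto simp: emeasure_restrict_space)
  ultimately show ?thesis unfolding ess_norm_def by simp
qed


definition Pr :: "real \<Rightarrow> 'a::euclidean_space \<Rightarrow> 'a" where
  "Pr \<rho> = closest_point (cball 0 \<rho>)"

lemma Pr_in: "\<rho> \<ge> 0 \<Longrightarrow> norm (Pr \<rho> v) \<le> \<rho>"
  unfolding Pr_def using closest_point_in_set[of "cball (0::'a) \<rho>" v] by auto

lemma Pr_lip: "\<rho> \<ge> 0 \<Longrightarrow> norm (Pr \<rho> v - Pr \<rho> w) \<le> norm (v - w)"
  unfolding Pr_def using closest_point_lipschitz[of "cball (0::'a) \<rho>" v w]
  by (auto simp: dist_norm)

lemma Pr_self: "norm v \<le> \<rho> \<Longrightarrow> Pr \<rho> v = v"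
  unfolding Pr_def by (rule closest_point_self) auto

lemma Pr_norm: "\<rho> \<ge> 0 \<Longrightarrow> norm (Pr \<rho> v) \<le> norm v"
  using Pr_lip[of \<rho> v 0] Pr_self[of "0::'a" \<rho>] by auto

lemma Pr_idem: "\<rho> \<ge> 0 \<Longrightarrow> Pr \<rho> (Pr \<rho> v) = Pr \<rho> v"
  using Pr_self Pr_in by blast

lemma Pr_meas[measurable]: "\<rho> \<ge> 0 \<Longrightarrow> Pr \<rho> \<in> borel_measurable borel"
  unfolding Pr_def
  by (intro borel_measurable_continuous_onI continuous_on_closest_point) auto

lemma meas_Pr: "\<rho> \<ge> 0 \<Longrightarrow> g \<in> borel_measurable M \<Longrightarrow> (\<lambda>t. Pr \<rho> (g t)) \<in> borel_measurable M"
  using measurable_compose[OF _ Pr_meas] by blast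

lemma pair_meas:
  fixes d :: "'b \<Rightarrow> 'c::euclidean_space" and u :: "'b \<Rightarrow> 'd::euclidean_space"
  assumes "d \<in> borel_measurable M" "u \<in> borel_measurable M"
  shows "(\<lambda>s. (d s, u s)) \<in> borel_measurable M"
  using assms by measurable

lemma ereal_bound_helper:
  fixes e1 e2 :: ereal
  assumes "ereal z \<le> ereal A * e1 + ereal B * e2" "e1 \<le> ereal c1" "e2 \<le> ereal c2" "A \<ge> 0" "B \<ge> 0"
  shows "z \<le> A * c1 + B * c2"
proof -
  have "ereal A * e1 \<le> ereal A * ereal c1" using assms by (intro ereal_mult_left_mono) auto
  moreover have "ereal B * e2 \<le> ereal B * ereal c2" using assms by (intro ereal_mult_left_mono) auto
  ultimately have "ereal z \<le> ereal A * ereal c1 + ereal B * ereal c2"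
    using assms(1) add_mono order.trans by blast
  then show ?thesis by simp
qed

lemma window:
  fixes g :: "real \<Rightarrow> 'a::euclidean_space"
  assumes A: "A \<in> sets lebesgue"
    and H: "AE \<tau> in lebesgue_on A. norm (g \<tau>) \<le> e + c * exp (l * \<tau>)"
    and c: "c \<ge> 0" and l: "l \<ge> 0" and sub: "\<forall>s\<in>{a..<b}. t + s \<in> A"
  shows "AE s in lebesgue_on {a..<b}. norm (g (t + s)) \<le> e + c * exp (l * (t + b))"
proof -
  have "AE s in lebesgue_on {a..<b}. t + s \<in> A \<longrightarrow> norm (g (t + s)) \<le> e + c * exp (l * (t + s))"
    using AE_shift[OF A _ H, of "{a..<b}" t] by simp
  moreover have "AE s in lebesgue_on {a..<b}. s \<in> {a..<b}"
    by (rule AE_I2) auto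
  ultimately show ?thesis
  proof eventually_elim
    case (elim s)
    then have "exp (l * (t + s)) \<le> exp (l * (t + b))" using l by (auto intro: mult_left_mono)
    then have "c * exp (l * (t + s)) \<le> c * exp (l * (t + b))" using c by (rule mult_left_mono)
    then show ?case using elim sub by fastforce
  qed
qed

lemma le_zero_from_pow:
  fixes z C :: real
  assumes "\<And>k::nat. z \<le> C / 2 ^ k"
  shows "z \<le> 0"
proof -
  have "(\<lambda>k. C * (1/2) ^ k) \<longlonglongrightarrow> C * 0"
    by (intro tendsto_mult tendsto_const LIMSEQ_power_zero) auto
  moreover have "\<forall>k. z \<le> C * (1/2) ^ k" using assms by (simp add: power_one_over)
  ultimately show ?thesis by (metis LIMSEQ_le_const mult_zero_right)
qed

lemma halving:
  fixes g w :: "'b \<Rightarrow> real"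
  assumes step: "\<And>c. c \<ge> 0 \<Longrightarrow> AE t in M. g t \<le> c * w t \<Longrightarrow> AE t in M. g t \<le> (c / 2 + \<beta>) * w t"
    and init: "AE t in M. g t \<le> ci * w t" and ci: "ci \<ge> 0" and \<beta>: "\<beta> \<ge> 0"
    and w: "\<And>t. w t \<ge> 0"
  shows "AE t in M. g t \<le> 2 * \<beta> * w t"
proof -
  have k: "AE t in M. g t \<le> (ci / 2 ^ k + 2 * \<beta>) * w t" for k :: nat
  proof (induction k)
    case 0
    then show ?case using init
      by eventually_elim (rule order.trans, assumption, use w \<beta> in \<open>auto intro!: mult_right_mono\<close>)
  next
    case (Suc k)
    have "AE t in M. g t \<le> ((ci / 2 ^ k + 2 * \<beta>) / 2 + \<beta>) * w t"
      by (rule step[OF _ Suc]) (use ci \<beta> in auto)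
    moreover have "(ci / 2 ^ k + 2 * \<beta>) / 2 + \<beta> = ci / 2 ^ Suc k + 2 * \<beta>"
      by (simp add: field_simps)
    ultimately show ?case by simp
  qed
  then have "AE t in M. \<forall>k::nat. g t \<le> (ci / 2 ^ k + 2 * \<beta>) * w t"
    by (simp add: AE_all_countable)
  then show ?thesis
  proof eventually_elim
    case (elim t)
    have "g t - 2 * \<beta> * w t \<le> (ci * w t) / 2 ^ k" for k :: nat
      using elim[rule_format, of k] by (simp add: field_simps)
    then have "g t - 2 * \<beta> * w t \<le> 0" by (rule le_zero_from_pow)
    then show ?case by simp
  qed
qed

lemma geom_cauchy:
  fixes z :: "nat \<Rightarrow> 'a::banach"
  assumes d: "\<And>k. norm (z (Suc k) - z k) \<le> C / 2 ^ k"
  shows "convergent z" "\<And>k. norm (lim z - z k) \<le> 2 * C / 2 ^ k"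
proof -
  have "norm (z (Suc 0) - z 0) \<le> C" using d[of 0] by simp
  then have C: "C \<ge> 0" using norm_ge_zero order.trans by blast
  have "summable (\<lambda>k. C * (1/2) ^ k)" by (intro summable_mult summable_geometric) auto
  then have "summable (\<lambda>k. z (Suc k) - z k)"
    by (rule summable_comparison_test[rotated]) (use d in \<open>auto simp: power_one_over\<close>)
  then have "(\<lambda>m. \<Sum>k<m. z (Suc k) - z k) \<longlonglongrightarrow> (\<Sum>k. z (Suc k) - z k)"
    by (rule summable_LIMSEQ)
  then have "(\<lambda>m. z 0 + (\<Sum>k<m. z (Suc k) - z k)) \<longlonglongrightarrow> z 0 + (\<Sum>k. z (Suc k) - z k)"
    by (intro tendsto_add tendsto_const)
  moreover have "(\<lambda>m. z 0 + (\<Sum>k<m. z (Suc k) - z k)) = z"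
    by (rule ext) (simp add: sum_lessThan_telescope)
  ultimately have lim: "z \<longlonglongrightarrow> z 0 + (\<Sum>k. z (Suc k) - z k)" by simp
  then show conv: "convergent z" by (auto simp: convergent_def)
  fix k
  have b: "norm (z (k + m) - z k) \<le> 2 * C / 2 ^ k - 2 * C / 2 ^ (k + m)" for m
  proof (induction m)
    case 0 then show ?case by simp
  next
    case (Suc m)
    have "norm (z (k + Suc m) - z k) \<le> norm (z (k + m) - z k) + norm (z (Suc (k + m)) - z (k + m))"
      using norm_triangle_ineq[of "z (k + m) - z k" "z (Suc (k + m)) - z (k + m)"] by simp
    also have "\<dots> \<le> 2 * C / 2 ^ k - 2 * C / 2 ^ (k + m) + C / 2 ^ (k + m)"
      using Suc d[of "k + m"] by simp
    also have "\<dots> = 2 * C / 2 ^ k - 2 * C / 2 ^ (k + Suc m)"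
      by (simp add: field_simps)
    finally show ?case .
  qed
  have "(\<lambda>m. norm (z m - z k)) \<longlonglongrightarrow> norm (lim z - z k)"
    using conv by (intro tendsto_norm tendsto_diff tendsto_const) (simp add: convergent_LIMSEQ_iff)
  moreover have "\<forall>m\<ge>k. norm (z m - z k) \<le> 2 * C / 2 ^ k"
  proof (intro allI impI)
    fix m assume "k \<le> m"
    then obtain j where "m = k + j" using le_Suc_ex by blast
    then show "norm (z m - z k) \<le> 2 * C / 2 ^ k" using b[of j] C by (smt (verit) divide_nonneg_pos zero_less_power)
  qed
  ultimately show "norm (lim z - z k) \<le> 2 * C / 2 ^ k"
    by (intro LIMSEQ_le_const2) auto
qed

locale sys =
  fixes r :: real and D :: "(real ^ 'm1) set" and U :: "(real ^ 'm2) set"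
    and f :: "(real \<Rightarrow> real ^ 'n) \<Rightarrow> (real \<Rightarrow> real ^ 'm1) \<Rightarrow> (real \<Rightarrow> real ^ 'm2) \<Rightarrow> real ^ 'n"
    and a M N b :: "real \<Rightarrow> real"
  assumes r_pos: "r > 0"
    and D_bdd: "bounded D"
    and f_welldef: "\<And>x x' d d' u u'.
        Linf {-r..<0} UNIV x \<Longrightarrow> Linf {-r..<0} UNIV x' \<Longrightarrow>
        Linf {-r..0} D d \<Longrightarrow> Linf {-r..0} D d' \<Longrightarrow>
        Linf {-r..0} U u \<Longrightarrow> Linf {-r..0} U u' \<Longrightarrow>
        ae_eq {-r..<0} x x' \<Longrightarrow> ae_eq {-r..0} d d' \<Longrightarrow> ae_eq {-r..0} u u' \<Longrightarrow>
        f x d u = f x' d' u'"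
    and nonneg: "\<forall>s\<ge>0. a s \<ge> 0 \<and> M s \<ge> 0 \<and> N s \<ge> 0"
    and H1: "\<forall>R>0. \<forall>x y d u.
          Linf {-r..<0} UNIV x \<and> Linf {-r..<0} UNIV y \<and> Linf {-r..0} D d \<and> Linf {-r..0} U u \<and>
          ess_norm {-r..<0} x \<le> ereal R \<and> ess_norm {-r..<0} y \<le> ereal R \<and>
          ess_norm {-r..0} (\<lambda>s. (d s, u s)) \<le> ereal R \<longrightarrow>
            (\<forall>h. 0 < h \<and> h < r \<longrightarrow>
               ereal (norm (f x d u - f y d u))
                 \<le> ereal (N R * h) * ess_norm {-h..<0} (\<lambda>s. x s - y s)
                   + ereal (M R) * ess_norm {-r..<-h} (\<lambda>s. x s - y s)) \<and>
            norm (f x d u) \<le> a R"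
    and H2: "\<And>\<delta> x d u. \<delta> > 0 \<Longrightarrow> Linf {-r..<\<delta>} UNIV x \<Longrightarrow>
        Linf {-r..\<delta>} D d \<Longrightarrow> Linf {-r..\<delta>} U u \<Longrightarrow>
        Linf {-r..<\<delta>} UNIV
          (\<lambda>t. if t < 0 then x t else f (shift x t) (shift d t) (shift u t))"
    and Kb: "K_inf b"
    and H3: "\<forall>x d u. Linf {-r..<0} UNIV x \<and> Linf {-r..0} D d \<and> Linf {-r..0} U u \<longrightarrow>
           norm (f x d u)
             \<le> b (real_of_ereal (max (ess_norm {-r..<0} x) (ess_norm {-r..0} u)))"
begin

lemma Lip:
  assumes R: "R > 0" and h: "0 < h" "h < r"
    and x: "Linf {-r..<0} UNIV x" and y: "Linf {-r..<0} UNIV y"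
    and d: "Linf {-r..0} D d" and u: "Linf {-r..0} U u"
    and xb: "AE s in lebesgue_on {-r..<0}. norm (x s) \<le> R"
    and yb: "AE s in lebesgue_on {-r..<0}. norm (y s) \<le> R"
    and wb: "AE s in lebesgue_on {-r..0}. norm (d s, u s) \<le> R"
    and c1: "AE s in lebesgue_on {-h..<0}. norm (x s - y s) \<le> c1"
    and c2: "AE s in lebesgue_on {-r..<-h}. norm (x s - y s) \<le> c2"
  shows "norm (f x d u - f y d u) \<le> N R * h * c1 + M R * c2"
    and "norm (f x d u) \<le> a R"
proof -
  have xm: "x \<in> borel_measurable (lebesgue_on {-r..<0})" using x by (simp add: Linf_def)
  have ym: "y \<in> borel_measurable (lebesgue_on {-r..<0})" using y by (simp add: Linf_def)
  have dm: "d \<in> borel_measurable (lebesgue_on {-r..0})" using d by (simp add: Linf_def)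
  have um: "u \<in> borel_measurable (lebesgue_on {-r..0})" using u by (simp add: Linf_def)
  have xym: "(\<lambda>s. x s - y s) \<in> borel_measurable (lebesgue_on {-r..<0})" using xm ym by measurable
  have xy1: "(\<lambda>s. x s - y s) \<in> borel_measurable (lebesgue_on {-h..<0})"
    by (rule measurable_restrict_mono[OF xym]) (use h in auto)
  have xy2: "(\<lambda>s. x s - y s) \<in> borel_measurable (lebesgue_on {-r..<-h})"
    by (rule measurable_restrict_mono[OF xym]) (use h in auto)
  have e1: "ess_norm {-h..<0} (\<lambda>s. x s - y s) \<le> ereal c1" by (rule ess_le[OF xy1 c1])
  have e2: "ess_norm {-r..<-h} (\<lambda>s. x s - y s) \<le> ereal c2" by (rule ess_le[OF xy2 c2])
  have "ess_norm {-r..<0} x \<le> ereal R" by (rule ess_le[OF xm xb])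
  moreover have "ess_norm {-r..<0} y \<le> ereal R" by (rule ess_le[OF ym yb])
  moreover have "ess_norm {-r..0} (\<lambda>s. (d s, u s)) \<le> ereal R"
    by (rule ess_le[OF pair_meas[OF dm um] wb])
  ultimately have H: "(\<forall>h. 0 < h \<and> h < r \<longrightarrow>
               ereal (norm (f x d u - f y d u))
                 \<le> ereal (N R * h) * ess_norm {-h..<0} (\<lambda>s. x s - y s)
                   + ereal (M R) * ess_norm {-r..<-h} (\<lambda>s. x s - y s)) \<and>
            norm (f x d u) \<le> a R"
    using H1 R x y d u by blast
  then show "norm (f x d u) \<le> a R" by blast
  have "ereal (norm (f x d u - f y d u))
                 \<le> ereal (N R * h) * ess_norm {-h..<0} (\<lambda>s. x s - y s)
                   + ereal (M R) * ess_norm {-r..<-h} (\<lambda>s. x s - y s)"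
    using H h by blast
  then show "norm (f x d u - f y d u) \<le> N R * h * c1 + M R * c2"
    by (rule ereal_bound_helper[OF _ e1 e2]) (use nonneg R h in auto)
qed

lemma shift_Linf:
  fixes g :: "real \<Rightarrow> 'a::euclidean_space"
  assumes "g \<in> borel_measurable (lebesgue_on {-r..<B})" "AE \<tau> in lebesgue_on {-r..<B}. norm (g \<tau>) \<le> R"
    "0 \<le> t" "t < B"
  shows "Linf {-r..<0} UNIV (shift g t)"
    and "AE s in lebesgue_on {-r..<0}. norm (shift g t s) \<le> R"
proof -
  have sub: "\<And>s. s \<in> {-r..<0} \<Longrightarrow> t + s \<in> {-r..<B}" using assms(3,4) by auto
  have m: "shift g t \<in> borel_measurable (lebesgue_on {-r..<0})"
    unfolding shift_def by (rule meas_shift[OF _ _ assms(1)]) (use sub in auto)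
  have "AE s in lebesgue_on {-r..<0}. t + s \<in> {-r..<B} \<longrightarrow> norm (g (t + s)) \<le> R"
    by (rule AE_shift[OF _ _ assms(2)]) auto
  moreover have "AE s in lebesgue_on {-r..<0}. s \<in> {-r..<0}" by (rule AE_I2) auto
  ultimately show b: "AE s in lebesgue_on {-r..<0}. norm (shift g t s) \<le> R"
    by eventually_elim (use sub in \<open>auto simp: shift_def\<close>)
  show "Linf {-r..<0} UNIV (shift g t)"
    unfolding Linf_def using m ess_le[OF m b] by auto
qed

lemma params:
  assumes R: "R > 0"
  obtains h l where "0 < h" "h < r" "N R * h \<le> 1/4" "l \<ge> 0" "M R * exp (- (l * h)) \<le> 1/4"
proof -
  have NR: "N R \<ge> 0" "M R \<ge> 0" using nonneg R by auto
  define h where "h = min (r/2) (1 / (4 * (N R + 1)))"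
  define l where "l = ln (4 * M R + 1) / h"
  have h: "0 < h" "h < r" using r_pos NR by (auto simp: h_def)
  have "N R * h \<le> N R * (1 / (4 * (N R + 1)))" using NR by (intro mult_left_mono) (auto simp: h_def)
  also have "\<dots> \<le> 1/4" using NR by (simp add: field_simps)
  finally have 1: "N R * h \<le> 1/4" .
  have l: "l \<ge> 0" using NR h by (auto simp: l_def)
  have "exp (- (l * h)) = 1 / (4 * M R + 1)"
    using h NR by (simp add: l_def exp_minus field_simps)
  then have "M R * exp (- (l * h)) = M R / (4 * M R + 1)" by simp
  also have "\<dots> \<le> 1/4" using NR by (simp add: field_simps)
  finally show ?thesis using that h 1 l by blast
qed

lemma inputs:
  assumes d: "Linf {-r..} D d" and u: "Linf_loc {-r..} U u"
    and Dm: "\<forall>v\<in>D. norm v \<le> Dm" and t: "t \<ge> 0"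
    and ub: "ess_norm {-r..0} (shift u t) \<le> ereal \<delta>"
  shows "Linf {-r..0} D (shift d t)" "Linf {-r..0} U (shift u t)"
    "AE s in lebesgue_on {-r..0}. norm (shift d t s, shift u t s) \<le> Dm + \<delta>"
proof -
  have sub: "\<And>s. s \<in> {-r..0} \<Longrightarrow> t + s \<in> {-r..}" using t by auto
  have dm: "shift d t \<in> borel_measurable (lebesgue_on {-r..0})"
    unfolding shift_def by (rule meas_shift[of "{-r..}"]) (use d sub in \<open>auto simp: Linf_def\<close>)
  have um: "shift u t \<in> borel_measurable (lebesgue_on {-r..0})"
    unfolding shift_def by (rule meas_shift[of "{-r..}"]) (use u sub in \<open>auto simp: Linf_loc_def\<close>)
  have "AE s in lebesgue_on {-r..0}. t + s \<in> {-r..} \<longrightarrow> d (t + s) \<in> D"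
    by (rule AE_shift) (use d in \<open>auto simp: Linf_def\<close>)
  moreover have "AE s in lebesgue_on {-r..0}. s \<in> {-r..0}" by (rule AE_I2) auto
  ultimately have dD: "AE s in lebesgue_on {-r..0}. shift d t s \<in> D"
    by eventually_elim (use sub in \<open>auto simp: shift_def\<close>)
  have "AE s in lebesgue_on {-r..0}. t + s \<in> {-r..} \<longrightarrow> u (t + s) \<in> U"
    by (rule AE_shift) (use u in \<open>auto simp: Linf_loc_def\<close>)
  moreover have "AE s in lebesgue_on {-r..0}. s \<in> {-r..0}" by (rule AE_I2) auto
  ultimately have uU: "AE s in lebesgue_on {-r..0}. shift u t s \<in> U"
    by eventually_elim (use sub in \<open>auto simp: shift_def\<close>)
  have dB: "AE s in lebesgue_on {-r..0}. norm (shift d t s) \<le> Dm"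
    using dD by eventually_elim (use Dm in auto)
  have "ess_norm {-r..0} (shift d t) \<le> ereal Dm" by (rule ess_le[OF dm dB])
  then show "Linf {-r..0} D (shift d t)" using dm dD unfolding Linf_def by auto
  show "Linf {-r..0} U (shift u t)" using um uU ub unfolding Linf_def by auto
  have uB: "AE s in lebesgue_on {-r..0}. norm (shift u t s) \<le> \<delta>" by (rule ess_AE_le[OF ub])
  show "AE s in lebesgue_on {-r..0}. norm (shift d t s, shift u t s) \<le> Dm + \<delta>"
    using dB uB by eventually_elim (use norm_Pair_le in \<open>smt (verit)\<close>)
qed

lemma core:
  assumes R: "R > 0" and h: "0 < h" "h < r" and NRh: "N R * h \<le> 1/4"
    and Ml: "M R * exp (- (l * h)) \<le> 1/4" and l: "l \<ge> 0" and t: "0 \<le> t" "t < B"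
    and g1m: "g1 \<in> borel_measurable (lebesgue_on {-r..<B})"
    and g2m: "g2 \<in> borel_measurable (lebesgue_on {-r..<B})"
    and g1b: "AE \<tau> in lebesgue_on {-r..<B}. norm (g1 \<tau>) \<le> R"
    and g2b: "AE \<tau> in lebesgue_on {-r..<B}. norm (g2 \<tau>) \<le> R"
    and df: "AE \<tau> in lebesgue_on {-r..<B}. norm (g1 \<tau> - g2 \<tau>) \<le> e + c * exp (l * \<tau>)"
    and e: "e \<ge> 0" and c: "c \<ge> 0"
    and dd: "Linf {-r..0} D (shift d t)" and uu: "Linf {-r..0} U (shift u t)"
    and ww: "AE s in lebesgue_on {-r..0}. norm (shift d t s, shift u t s) \<le> R"
  shows "norm (f (shift g1 t) (shift d t) (shift u t) - f (shift g2 t) (shift d t) (shift u t))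
           \<le> (N R * h + M R) * e + c / 2 * exp (l * t)"
    and "norm (f (shift g1 t) (shift d t) (shift u t)) \<le> a R"
proof -
  note L1 = shift_Linf[OF g1m g1b t] and L2 = shift_Linf[OF g2m g2b t]
  have w1: "AE s in lebesgue_on {-h..<0}. norm (g1 (t + s) - g2 (t + s)) \<le> e + c * exp (l * (t + 0))"
    by (rule window[OF _ df c l]) (use h t in auto)
  have w2: "AE s in lebesgue_on {-r..<-h}. norm (g1 (t + s) - g2 (t + s)) \<le> e + c * exp (l * (t + -h))"
    by (rule window[OF _ df c l]) (use h t in auto)
  have main: "norm (f (shift g1 t) (shift d t) (shift u t) - f (shift g2 t) (shift d t) (shift u t))
     \<le> N R * h * (e + c * exp (l * (t + 0))) + M R * (e + c * exp (l * (t + -h)))"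
    by (rule Lip(1)[OF R h L1(1) L2(1) dd uu L1(2) L2(2) ww])
       (use w1 w2 in \<open>simp_all add: shift_def\<close>)
  show "norm (f (shift g1 t) (shift d t) (shift u t)) \<le> a R"
    by (rule Lip(2)[OF R h L1(1) L2(1) dd uu L1(2) L2(2) ww])
       (use w1 w2 in \<open>simp_all add: shift_def\<close>)
  have NR: "N R \<ge> 0" "M R \<ge> 0" using nonneg R by auto
  have ex: "exp (l * (t + -h)) = exp (l * t) * exp (- (l * h))"
    by (simp add: exp_add[symmetric] algebra_simps)
  have "N R * h * (e + c * exp (l * (t + 0))) + M R * (e + c * exp (l * (t + -h)))
      = (N R * h + M R) * e + (c * exp (l * t)) * (N R * h + M R * exp (- (l * h)))"
    unfolding ex add_0_right by algebra
  also have "\<dots> \<le> (N R * h + M R) * e + (c * exp (l * t)) * (1/2)"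
    using NRh Ml c by (intro add_left_mono mult_left_mono) auto
  finally show "norm (f (shift g1 t) (shift d t) (shift u t) - f (shift g2 t) (shift d t) (shift u t))
           \<le> (N R * h + M R) * e + c / 2 * exp (l * t)" using main by simp
qed


lemma uniqB:
  assumes B: "0 < B" "B < S" and Wb: "Wb \<ge> 0"
    and inps: "\<And>t. 0 \<le> t \<Longrightarrow> Linf {-r..0} D (shift d t) \<and> Linf {-r..0} U (shift u t) \<and>
                 (AE s in lebesgue_on {-r..0}. norm (shift d t s, shift u t s) \<le> Wb)"
    and y: "Linf_loc {-r..<S} UNIV y" and x: "Linf_loc {-r..<S} UNIV x"
    and ey: "AE t in lebesgue_on {0..<S}. y t = f (shift y t) (shift d t) (shift u t)"
    and ex: "AE t in lebesgue_on {0..<S}. x t = f (shift x t) (shift d t) (shift u t)"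
    and y0: "ae_eq {-r..<0} y x0" and x0: "ae_eq {-r..<0} x x0"
  shows "AE \<tau> in lebesgue_on {-r..<B}. y \<tau> = x \<tau>"
proof -
  have subB: "{-r..B} \<subseteq> {-r..<S}" using B by auto
  have ym: "y \<in> borel_measurable (lebesgue_on {-r..<B})"
    by (rule measurable_restrict_mono[of _ _ "{-r..<S}"]) (use y B in \<open>auto simp: Linf_loc_def\<close>)
  have xm: "x \<in> borel_measurable (lebesgue_on {-r..<B})"
    by (rule measurable_restrict_mono[of _ _ "{-r..<S}"]) (use x B in \<open>auto simp: Linf_loc_def\<close>)
  obtain Ry where Ry: "Ry \<ge> 0" "AE \<tau> in lebesgue_on {-r..B}. norm (y \<tau>) \<le> Ry"
    using ess_fin_bnd[of "{-r..B}" y] y subB unfolding Linf_loc_def by blast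
  obtain Rx where Rx: "Rx \<ge> 0" "AE \<tau> in lebesgue_on {-r..B}. norm (x \<tau>) \<le> Rx"
    using ess_fin_bnd[of "{-r..B}" x] x subB unfolding Linf_loc_def by blast
  define R where "R = Ry + Rx + Wb + 1"
  have R: "R > 0" using Ry Rx Wb by (simp add: R_def)
  obtain h l where hp: "0 < h" "h < r" "N R * h \<le> 1/4" "l \<ge> 0" "M R * exp (- (l * h)) \<le> 1/4"
    using params[OF R] by blast
  have yB: "AE \<tau> in lebesgue_on {-r..<B}. norm (y \<tau>) \<le> Ry"
    by (rule AE_mono_set[OF _ _ Ry(2)]) auto
  have xB: "AE \<tau> in lebesgue_on {-r..<B}. norm (x \<tau>) \<le> Rx"
    by (rule AE_mono_set[OF _ _ Rx(2)]) auto
  have yR: "AE \<tau> in lebesgue_on {-r..<B}. norm (y \<tau>) \<le> R"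
    using yB by eventually_elim (use Rx Wb in \<open>simp add: R_def\<close>)
  have xR: "AE \<tau> in lebesgue_on {-r..<B}. norm (x \<tau>) \<le> R"
    using xB by eventually_elim (use Ry Wb in \<open>simp add: R_def\<close>)
  have neg: "AE \<tau> in lebesgue_on {-r..<B}. \<tau> \<in> {-r..<0} \<longrightarrow> y \<tau> = x \<tau>"
  proof -
    have "AE \<tau> in lebesgue_on {-r..<B}. \<tau> \<in> {-r..<0} \<longrightarrow> y \<tau> = x0 \<tau>"
      by (rule AE_sub[OF _ _ y0[unfolded ae_eq_def]]) auto
    moreover have "AE \<tau> in lebesgue_on {-r..<B}. \<tau> \<in> {-r..<0} \<longrightarrow> x \<tau> = x0 \<tau>"
      by (rule AE_sub[OF _ _ x0[unfolded ae_eq_def]]) auto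
    ultimately show ?thesis by eventually_elim auto
  qed
  have eyB: "AE t in lebesgue_on {0..<B}. y t = f (shift y t) (shift d t) (shift u t)"
    by (rule AE_mono_set[OF _ _ ey]) (use B in auto)
  have exB: "AE t in lebesgue_on {0..<B}. x t = f (shift x t) (shift d t) (shift u t)"
    by (rule AE_mono_set[OF _ _ ex]) (use B in auto)
  have main: "AE \<tau> in lebesgue_on {0..<B}. norm (y \<tau> - x \<tau>) \<le> 2 * 0 * exp (l * \<tau>)"
  proof (rule halving[where g="\<lambda>\<tau>. norm (y \<tau> - x \<tau>)" and w="\<lambda>\<tau>. exp (l * \<tau>)" and ci="Ry + Rx"])
    show "Ry + Rx \<ge> 0" using Ry Rx by simp
    show "(0::real) \<ge> 0" by simp
    show "\<And>t. 0 \<le> exp (l * t)" by simp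
    have yB0: "AE \<tau> in lebesgue_on {0..<B}. norm (y \<tau>) \<le> Ry"
      by (rule AE_mono_set[OF _ _ Ry(2)]) (use r_pos in auto)
    have xB0: "AE \<tau> in lebesgue_on {0..<B}. norm (x \<tau>) \<le> Rx"
      by (rule AE_mono_set[OF _ _ Rx(2)]) (use r_pos in auto)
    show "AE \<tau> in lebesgue_on {0..<B}. norm (y \<tau> - x \<tau>) \<le> (Ry + Rx) * exp (l * \<tau>)"
      using yB0 xB0 AE_in
    proof eventually_elim
      case (elim \<tau>)
      have "norm (y \<tau> - x \<tau>) \<le> Ry + Rx" using elim norm_triangle_ineq4[of "y \<tau>" "x \<tau>"] by simp
      moreover have "1 \<le> exp (l * \<tau>)" using elim hp by simp
      then have "Ry + Rx \<le> (Ry + Rx) * exp (l * \<tau>)" using Ry Rx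
        by (metis add_nonneg_nonneg mult_left_mono mult.right_neutral)
      ultimately show ?case by simp
    qed
    fix c :: real assume c: "c \<ge> 0"
    assume H: "AE \<tau> in lebesgue_on {0..<B}. norm (y \<tau> - x \<tau>) \<le> c * exp (l * \<tau>)"
    have H': "AE \<tau> in lebesgue_on {-r..<B}. \<tau> \<in> {0..<B} \<longrightarrow> norm (y \<tau> - x \<tau>) \<le> c * exp (l * \<tau>)"
      by (rule AE_sub[OF _ _ H]) auto
    have df: "AE \<tau> in lebesgue_on {-r..<B}. norm (y \<tau> - x \<tau>) \<le> 0 + c * exp (l * \<tau>)"
      using H' neg AE_in
    proof eventually_elim
      case (elim \<tau>)
      then show ?case using c by (cases "\<tau> < 0") auto
    qed
    show "AE \<tau> in lebesgue_on {0..<B}. norm (y \<tau> - x \<tau>) \<le> (c / 2 + 0) * exp (l * \<tau>)"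
      using eyB exB AE_in
    proof eventually_elim
      case (elim t)
      then have t: "0 \<le> t" "t < B" by auto
      note I = inps[OF t(1)]
      have "norm (f (shift y t) (shift d t) (shift u t) - f (shift x t) (shift d t) (shift u t))
           \<le> (N R * h + M R) * 0 + c / 2 * exp (l * t)"
      proof (rule core(1)[OF R hp(1,2,3,5,4) t ym xm yR xR df order.refl c])
        show "Linf {-r..0} D (shift d t)" "Linf {-r..0} U (shift u t)" using I by auto
        have "AE s in lebesgue_on {-r..0}. norm (shift d t s, shift u t s) \<le> Wb" using I by auto
        then show "AE s in lebesgue_on {-r..0}. norm (shift d t s, shift u t s) \<le> R"
          by eventually_elim (use Ry Rx in \<open>simp add: R_def\<close>)
      qed
      then show ?case using elim by simp
    qed
  qed
  have main': "AE \<tau> in lebesgue_on {-r..<B}. \<tau> \<in> {0..<B} \<longrightarrow> norm (y \<tau> - x \<tau>) \<le> 2 * 0 * exp (l * \<tau>)"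
    by (rule AE_sub[OF _ _ main]) auto
  show ?thesis using main' neg AE_in
  proof eventually_elim
    case (elim \<tau>) then show ?case by (cases "\<tau> < 0") auto
  qed
qed

lemma uniq:
  assumes S: "0 < S" and Wb: "Wb \<ge> 0"
    and inps: "\<And>t. 0 \<le> t \<Longrightarrow> Linf {-r..0} D (shift d t) \<and> Linf {-r..0} U (shift u t) \<and>
                 (AE s in lebesgue_on {-r..0}. norm (shift d t s, shift u t s) \<le> Wb)"
    and y: "Linf_loc {-r..<S} UNIV y" and x: "Linf_loc {-r..<S} UNIV x"
    and ey: "AE t in lebesgue_on {0..<S}. y t = f (shift y t) (shift d t) (shift u t)"
    and ex: "AE t in lebesgue_on {0..<S}. x t = f (shift x t) (shift d t) (shift u t)"
    and y0: "ae_eq {-r..<0} y x0" and x0: "ae_eq {-r..<0} x x0"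
  shows "ae_eq {-r..<S} y x"
proof -
  define B where "B n = S - S / (real n + 2)" for n :: nat
  have Bp: "0 < B n" "B n < S" for n
  proof -
    have "S / (real n + 2) \<le> S / 2" using S by (intro divide_left_mono) auto
    then show "0 < B n" using S unfolding B_def by linarith
    have "0 < S / (real n + 2)" using S by simp
    then show "B n < S" unfolding B_def by linarith
  qed
  have "AE \<tau> in lebesgue_on {-r..<S}. \<tau> \<in> {-r..<B n} \<longrightarrow> y \<tau> = x \<tau>" for n
    by (rule AE_sub[OF _ _ uniqB[OF Bp(1)[of n] Bp(2)[of n] Wb inps y x ey ex y0 x0]]) auto
  then have "AE \<tau> in lebesgue_on {-r..<S}. \<forall>n. \<tau> \<in> {-r..<B n} \<longrightarrow> y \<tau> = x \<tau>"
    by (subst AE_all_countable) blast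
  then show ?thesis unfolding ae_eq_def using AE_in
  proof eventually_elim
    case (elim \<tau>)
    then have \<tau>: "-r \<le> \<tau>" "\<tau> < S" by auto
    obtain n :: nat where n: "S / (S - \<tau>) < real n" using reals_Archimedean2 by blast
    have "S < real n * (S - \<tau>)" using n \<tau> by (simp add: field_simps)
    also have "\<dots> < (real n + 2) * (S - \<tau>)" using \<tau> by (intro mult_strict_right_mono) auto
    finally have "S / (real n + 2) < S - \<tau>" by (simp add: field_simps)
    then have "\<tau> < B n" by (simp add: B_def)
    then show ?case using elim \<tau> by auto
  qed
qed

end

lemma emeas_Ico_ne: "a < b \<Longrightarrow> emeasure lebesgue {a..<(b::real)} \<noteq> 0"
proof -
  assume "a < b"
  show ?thesis
  proof
    assume "emeasure lebesgue {a..<b} = 0"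
    then have "{a..<b} \<in> null_sets lebesgue" by (auto simp: null_sets_def)
    then have "{a..<b} \<in> null_sets lborel" by (subst null_sets_completion_iff[symmetric]) auto
    then show False using \<open>a < b\<close> by (auto simp: null_sets_def)
  qed
qed

lemma emeas_Icc_ne: "a < b \<Longrightarrow> emeasure lebesgue {a..(b::real)} \<noteq> 0"
proof -
  assume "a < b"
  show ?thesis
  proof
    assume "emeasure lebesgue {a..b} = 0"
    then have "{a..b} \<in> null_sets lebesgue" by (auto simp: null_sets_def)
    then have "{a..b} \<in> null_sets lborel" by (subst null_sets_completion_iff[symmetric]) auto
    then show False using \<open>a < b\<close> by (auto simp: null_sets_def)
  qed
qed

locale sys2 = sys r D U f a M N b
  for r D U and f :: "(real \<Rightarrow> real ^ 'n) \<Rightarrow> (real \<Rightarrow> real ^ 'm1) \<Rightarrow> (real \<Rightarrow> real ^ 'm2) \<Rightarrow> real ^ 'n" and a M N b +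
  fixes x0 :: "real \<Rightarrow> real ^ 'n" and d :: "real \<Rightarrow> real ^ 'm1" and u :: "real \<Rightarrow> real ^ 'm2"
    and \<rho> \<delta> Dm R h l S :: real
  assumes rho: "\<rho> > 0" and del: "\<delta> > 0" "\<delta> \<le> \<rho>" and RR: "\<rho> \<le> R" "Dm + \<delta> \<le> R"
    and Dm: "\<forall>v\<in>D. norm v \<le> Dm"
    and hp: "0 < h" "h < r" "N R * h \<le> 1/4" "l \<ge> 0" "M R * exp (- (l * h)) \<le> 1/4"
    and S: "S > 0"
    and x0: "Linf {-r..<0} UNIV x0" and x0b: "AE s in lebesgue_on {-r..<0}. norm (x0 s) \<le> \<delta>"
    and d: "Linf {-r..} D d" and u: "Linf_loc {-r..} U u"
    and ub: "\<forall>t\<ge>0. ess_norm {-r..0} (shift u t) \<le> ereal \<delta>"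
    and beta: "2 * ((N R * h + M R) * \<delta> + b \<delta>) * exp (l * S) \<le> \<rho>"
begin

lemma R_pos: "R > 0" using rho RR by linarith

lemma inp:
  assumes "t \<ge> 0"
  shows "Linf {-r..0} D (shift d t)" "Linf {-r..0} U (shift u t)"
    "AE s in lebesgue_on {-r..0}. norm (shift d t s, shift u t s) \<le> R"
proof -
  note I = inputs[OF d u Dm assms, of \<delta>] ub assms
  show "Linf {-r..0} D (shift d t)" "Linf {-r..0} U (shift u t)" using I by auto
  have "AE s in lebesgue_on {-r..0}. norm (shift d t s, shift u t s) \<le> Dm + \<delta>" using I by auto
  then show "AE s in lebesgue_on {-r..0}. norm (shift d t s, shift u t s) \<le> R"
    by eventually_elim (use RR in auto)
qed

definition G :: "(real \<Rightarrow> real ^ 'n) \<Rightarrow> real \<Rightarrow> real ^ 'n" where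
  "G g t = (if t < 0 then Pr \<rho> (x0 t) else f (shift (\<lambda>\<tau>. Pr \<rho> (g \<tau>)) t) (shift d t) (shift u t))"

definition z :: "nat \<Rightarrow> real \<Rightarrow> real ^ 'n" where
  "z k = (G ^^ k) (\<lambda>t. if t < 0 then Pr \<rho> (x0 t) else 0)"

definition xs :: "real \<Rightarrow> real ^ 'n" where
  "xs t = lim (\<lambda>k. z k t)"

lemma z_neg: "t < 0 \<Longrightarrow> z k t = Pr \<rho> (x0 t)"
  by (cases k) (auto simp: z_def G_def)

lemma Pr_R: "norm (Pr \<rho> v) \<le> R"
proof -
  have "norm (Pr \<rho> v) \<le> \<rho>" by (rule Pr_in) (use rho in linarith)
  then show ?thesis using RR by linarith
qed

lemma Prg_bnd: "AE \<tau> in lebesgue_on A. norm (Pr \<rho> (g \<tau>)) \<le> R"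
  by (rule AE_I2) (rule Pr_R)

lemma rho0: "0 \<le> \<rho>" using rho by linarith

lemma Pr_meas_on: "g \<in> borel_measurable Mm \<Longrightarrow> (\<lambda>\<tau>. Pr \<rho> (g \<tau>)) \<in> borel_measurable Mm"
  by (rule meas_Pr[OF rho0])

lemma d_Linf: "Linf {-r..S} D d"
proof -
  have m: "d \<in> borel_measurable (lebesgue_on {-r..S})"
    by (rule measurable_restrict_mono[of _ _ "{-r..}"]) (use d in \<open>auto simp: Linf_def\<close>)
  have dD: "AE s in lebesgue_on {-r..S}. d s \<in> D"
    by (rule AE_mono_set[of "{-r..}"]) (use d in \<open>auto simp: Linf_def\<close>)
  have "AE s in lebesgue_on {-r..S}. norm (d s) \<le> Dm"
    using dD by eventually_elim (use Dm in auto)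
  then have "ess_norm {-r..S} d \<le> ereal Dm" by (rule ess_le[OF m])
  then have "ess_norm {-r..S} d < \<infinity>" by (rule ereal_le_fin)
  then show ?thesis unfolding Linf_def using m dD by blast
qed

lemma u_Linf: "Linf {-r..S} U u"
proof -
  have "u \<in> borel_measurable (lebesgue_on {-r..S})"
    by (rule measurable_restrict_mono[of _ _ "{-r..}"]) (use u in \<open>auto simp: Linf_loc_def\<close>)
  moreover have "AE s in lebesgue_on {-r..S}. u s \<in> U"
    by (rule AE_mono_set[of "{-r..}"]) (use u in \<open>auto simp: Linf_loc_def\<close>)
  moreover have "ess_norm {-r..S} u < \<infinity>" using u unfolding Linf_loc_def by auto
  ultimately show ?thesis unfolding Linf_def by blast
qed

lemma G_meas:
  assumes gm: "g \<in> borel_measurable (lebesgue_on {-r..<S})" and gneg: "\<forall>t<0. g t = Pr \<rho> (x0 t)"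
  shows "G g \<in> borel_measurable (lebesgue_on {-r..<S})"
proof -
  have pm: "(\<lambda>\<tau>. Pr \<rho> (g \<tau>)) \<in> borel_measurable (lebesgue_on {-r..<S})"
    by (rule Pr_meas_on[OF gm])
  have "ess_norm {-r..<S} (\<lambda>\<tau>. Pr \<rho> (g \<tau>)) \<le> ereal R" by (rule ess_le[OF pm Prg_bnd])
  then have "ess_norm {-r..<S} (\<lambda>\<tau>. Pr \<rho> (g \<tau>)) < \<infinity>" by (rule ereal_le_fin)
  then have L: "Linf {-r..<S} UNIV (\<lambda>\<tau>. Pr \<rho> (g \<tau>))" using pm unfolding Linf_def by simp
  have H: "Linf {-r..<S} UNIV (\<lambda>t. if t < 0 then Pr \<rho> (g t) else f (shift (\<lambda>\<tau>. Pr \<rho> (g \<tau>)) t) (shift d t) (shift u t))"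
    by (rule H2[OF S L d_Linf u_Linf])
  have "(\<lambda>t. if t < 0 then Pr \<rho> (g t) else f (shift (\<lambda>\<tau>. Pr \<rho> (g \<tau>)) t) (shift d t) (shift u t)) = G g"
  proof
    fix t show "(if t < 0 then Pr \<rho> (g t) else f (shift (\<lambda>\<tau>. Pr \<rho> (g \<tau>)) t) (shift d t) (shift u t)) = G g t"
      using gneg unfolding G_def by (simp add: Pr_idem[OF rho0])
  qed
  then show ?thesis using H unfolding Linf_def by simp
qed

lemma z0_meas: "(\<lambda>t. if t < 0 then Pr \<rho> (x0 t) else 0) \<in> borel_measurable (lebesgue_on {-r..<S})"
proof -
  have "(\<lambda>t. Pr \<rho> (x0 t)) \<in> borel_measurable (lebesgue_on {-r..<0})"
    by (rule Pr_meas_on) (use x0 in \<open>simp add: Linf_def\<close>)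
  then have "(\<lambda>t. if t \<in> {-r..<0} then Pr \<rho> (x0 t) else 0) \<in> borel_measurable (lebesgue_on {-r..<S})"
    using borel_measurable_if_lebesgue_on[of "{-r..<0}" "{-r..<S}" "\<lambda>t. Pr \<rho> (x0 t)"] S by auto
  then show ?thesis
    by (rule measurable_cong[THEN iffD1, rotated]) auto
qed

lemma z_meas: "z k \<in> borel_measurable (lebesgue_on {-r..<S})"
proof (induction k)
  case 0 then show ?case using z0_meas by (simp add: z_def)
next
  case (Suc k)
  have "z (Suc k) = G (z k)" by (simp add: z_def)
  then show ?case using G_meas[OF Suc] z_neg by simp
qed

lemma G_core:
  assumes g1m: "g1 \<in> borel_measurable (lebesgue_on {-r..<S})"
    and g2m: "g2 \<in> borel_measurable (lebesgue_on {-r..<S})"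
    and df: "AE \<tau> in lebesgue_on {-r..<S}. norm (g1 \<tau> - g2 \<tau>) \<le> c * exp (l * \<tau>)"
    and c: "c \<ge> 0" and t: "0 \<le> t" "t < S"
  shows "norm (G g1 t - G g2 t) \<le> c / 2 * exp (l * t)" "norm (G g1 t) \<le> a R"
proof -
  have p1: "(\<lambda>\<tau>. Pr \<rho> (g1 \<tau>)) \<in> borel_measurable (lebesgue_on {-r..<S})"
    by (rule Pr_meas_on[OF g1m])
  have p2: "(\<lambda>\<tau>. Pr \<rho> (g2 \<tau>)) \<in> borel_measurable (lebesgue_on {-r..<S})"
    by (rule Pr_meas_on[OF g2m])
  have df': "AE \<tau> in lebesgue_on {-r..<S}. norm (Pr \<rho> (g1 \<tau>) - Pr \<rho> (g2 \<tau>)) \<le> 0 + c * exp (l * \<tau>)"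
  proof (rule AE_mp[OF df], rule AE_I2, intro impI)
    fix \<tau> assume "norm (g1 \<tau> - g2 \<tau>) \<le> c * exp (l * \<tau>)"
    moreover have "norm (Pr \<rho> (g1 \<tau>) - Pr \<rho> (g2 \<tau>)) \<le> norm (g1 \<tau> - g2 \<tau>)"
      by (rule Pr_lip[OF rho0])
    ultimately show "norm (Pr \<rho> (g1 \<tau>) - Pr \<rho> (g2 \<tau>)) \<le> 0 + c * exp (l * \<tau>)" by simp
  qed
  note C = core[OF R_pos hp(1,2,3,5,4) t p1 p2 Prg_bnd Prg_bnd df' _ c inp[OF t(1)]]
  show "norm (G g1 t - G g2 t) \<le> c / 2 * exp (l * t)" using C(1) t by (simp add: G_def)
  show "norm (G g1 t) \<le> a R" using C(2) t by (simp add: G_def)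
qed

lemma G_contr:
  assumes g1m: "g1 \<in> borel_measurable (lebesgue_on {-r..<S})"
    and g2m: "g2 \<in> borel_measurable (lebesgue_on {-r..<S})"
    and df: "AE \<tau> in lebesgue_on {-r..<S}. norm (g1 \<tau> - g2 \<tau>) \<le> c * exp (l * \<tau>)"
    and c: "c \<ge> 0" and t: "t < S"
  shows "norm (G g1 t - G g2 t) \<le> c / 2 * exp (l * t)"
proof (cases "t < 0")
  case True then show ?thesis using c by (simp add: G_def)
next
  case False then show ?thesis using G_core(1)[OF g1m g2m df c _ t] by simp
qed

lemma aR: "a R \<ge> 0" using nonneg R_pos by auto

lemma z_diff: "AE \<tau> in lebesgue_on {-r..<S}. norm (z (Suc k) \<tau> - z k \<tau>) \<le> a R / 2 ^ k * exp (l * \<tau>)"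
proof (induction k)
  case 0
  show ?case
  proof (rule AE_I2)
    fix \<tau> assume "\<tau> \<in> space (lebesgue_on {-r..<S})"
    then have \<tau>: "\<tau> < S" by auto
    show "norm (z (Suc 0) \<tau> - z 0 \<tau>) \<le> a R / 2 ^ 0 * exp (l * \<tau>)"
    proof (cases "\<tau> < 0")
      case True then show ?thesis using z_neg aR by simp
    next
      case False
      have A0: "AE \<tau> in lebesgue_on {-r..<S}. norm (z 0 \<tau> - z 0 \<tau>) \<le> 0 * exp (l * \<tau>)" by simp
      have "norm (G (z 0) \<tau>) \<le> a R"
        by (rule G_core(2)[OF z_meas z_meas A0 order.refl]) (use False \<tau> in auto)
      moreover have "1 \<le> exp (l * \<tau>)" using False hp by simp
      then have "a R \<le> a R * exp (l * \<tau>)" using aR by (metis mult_left_mono mult.right_neutral)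
      ultimately show ?thesis using False by (simp add: z_def)
    qed
  qed
next
  case (Suc k)
  show ?case
  proof (rule AE_I2)
    fix \<tau> assume "\<tau> \<in> space (lebesgue_on {-r..<S})"
    then have \<tau>: "\<tau> < S" by auto
    have "norm (G (z (Suc k)) \<tau> - G (z k) \<tau>) \<le> a R / 2 ^ k / 2 * exp (l * \<tau>)"
      by (rule G_contr[OF z_meas z_meas Suc _ \<tau>]) (use aR in auto)
    then show "norm (z (Suc (Suc k)) \<tau> - z (Suc k) \<tau>) \<le> a R / 2 ^ Suc k * exp (l * \<tau>)"
      by (simp add: z_def)
  qed
qed

lemma xs_conv: "AE \<tau> in lebesgue_on {-r..<S}. \<forall>k. norm (xs \<tau> - z k \<tau>) \<le> 2 * a R / 2 ^ k * exp (l * \<tau>)"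
proof -
  have "AE \<tau> in lebesgue_on {-r..<S}. \<forall>k. norm (z (Suc k) \<tau> - z k \<tau>) \<le> a R / 2 ^ k * exp (l * \<tau>)"
    using z_diff by (simp add: AE_all_countable)
  then show ?thesis
  proof eventually_elim
    case (elim \<tau>)
    have "norm (z (Suc k) \<tau> - z k \<tau>) \<le> (a R * exp (l * \<tau>)) / 2 ^ k" for k
      using elim by simp
    from geom_cauchy(2)[of "\<lambda>k. z k \<tau>", OF this]
    show ?case by (simp add: xs_def mult.assoc)
  qed
qed

lemma xs_neg: "t < 0 \<Longrightarrow> xs t = Pr \<rho> (x0 t)"
  by (simp add: xs_def z_neg)

lemma xs_meas: "xs \<in> borel_measurable (lebesgue_on {-r..<S})"
  unfolding xs_def by (rule borel_measurable_lim_metric) (rule z_meas)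

lemma xs_fix: "AE \<tau> in lebesgue_on {-r..<S}. G xs \<tau> = xs \<tau>"
proof -
  have k: "AE \<tau> in lebesgue_on {-r..<S}. norm (G xs \<tau> - xs \<tau>) \<le> 2 * a R * exp (l * \<tau>) / 2 ^ k" for k :: nat
  proof -
    have A: "AE \<tau> in lebesgue_on {-r..<S}. norm (xs \<tau> - z k \<tau>) \<le> (2 * a R / 2 ^ k) * exp (l * \<tau>)"
      using xs_conv by eventually_elim auto
    have B: "\<forall>\<tau>. \<tau> < S \<longrightarrow> norm (G xs \<tau> - z (Suc k) \<tau>) \<le> (2 * a R / 2 ^ k) / 2 * exp (l * \<tau>)"
      using G_contr[OF xs_meas z_meas A] aR by (simp add: z_def)
    have Sp: "AE \<tau> in lebesgue_on {-r..<S}. \<tau> < S" by (rule AE_I2) auto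
    show ?thesis using xs_conv Sp
    proof eventually_elim
      case (elim \<tau>)
      have 1: "norm (G xs \<tau> - z (Suc k) \<tau>) \<le> a R * exp (l * \<tau>) / 2 ^ k" using B elim by simp
      have 2: "norm (xs \<tau> - z (Suc k) \<tau>) \<le> a R * exp (l * \<tau>) / 2 ^ k" using elim(1)[rule_format, of "Suc k"] by simp
      have "norm (G xs \<tau> - xs \<tau>) \<le> norm (G xs \<tau> - z (Suc k) \<tau>) + norm (xs \<tau> - z (Suc k) \<tau>)"
        using norm_triangle_ineq4[of "G xs \<tau> - z (Suc k) \<tau>" "xs \<tau> - z (Suc k) \<tau>"] by simp
      then show ?case using 1 2 by simp
    qed
  qed
  then have "AE \<tau> in lebesgue_on {-r..<S}. \<forall>k::nat. norm (G xs \<tau> - xs \<tau>) \<le> 2 * a R * exp (l * \<tau>) / 2 ^ k"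
    by (simp add: AE_all_countable)
  then show ?thesis
  proof eventually_elim
    case (elim \<tau>)
    then have "norm (G xs \<tau> - xs \<tau>) \<le> 0" by (intro le_zero_from_pow) blast
    then show ?case by simp
  qed
qed


lemma b_mono: "0 \<le> x \<Longrightarrow> x \<le> y \<Longrightarrow> b x \<le> b y"
  using Kb unfolding K_inf_def by (auto intro: strict_mono_on_leD)

lemma b_nonneg: "0 \<le> x \<Longrightarrow> 0 \<le> b x"
  using b_mono[of 0 x] Kb unfolding K_inf_def by auto

lemma zero_Linf: "Linf {-r..<0} UNIV (\<lambda>s. 0 :: real ^ 'n)"
proof -
  have m: "(\<lambda>s. 0 :: real ^ 'n) \<in> borel_measurable (lebesgue_on {-r..<0})" by simp
  have "ess_norm {-r..<0} (\<lambda>s. 0 :: real ^ 'n) \<le> ereal 0" by (rule ess_le[OF m]) simp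
  then show ?thesis unfolding Linf_def using ereal_le_fin by auto
qed

lemma f0_bnd:
  assumes t: "t \<ge> 0"
  shows "norm (f (\<lambda>s. 0) (shift d t) (shift u t)) \<le> b \<delta>"
proof -
  note I = inp[OF t]
  have n: "norm (f (\<lambda>s. 0) (shift d t) (shift u t))
     \<le> b (real_of_ereal (max (ess_norm {-r..<0} (\<lambda>s. 0 :: real ^ 'n)) (ess_norm {-r..0} (shift u t))))"
    using H3 zero_Linf I(1,2) by blast
  have "ess_norm {-r..<0} (\<lambda>s. 0 :: real ^ 'n) \<le> ereal 0" by (rule ess_le) simp_all
  moreover have "0 \<le> ess_norm {-r..<0} (\<lambda>s. 0 :: real ^ 'n)"
    by (rule ess_nonneg) (use emeas_Ico_ne r_pos in auto)
  moreover have u0: "0 \<le> ess_norm {-r..0} (shift u t)"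
    by (rule ess_nonneg) (use emeas_Icc_ne r_pos in auto)
  ultimately have "max (ess_norm {-r..<0} (\<lambda>s. 0 :: real ^ 'n)) (ess_norm {-r..0} (shift u t)) = ess_norm {-r..0} (shift u t)"
    by (metis antisym max.absorb2 zero_ereal_def)
  moreover obtain v where v: "ess_norm {-r..0} (shift u t) = ereal v" "0 \<le> v" "v \<le> \<delta>"
    using u0 ub t by (cases "ess_norm {-r..0} (shift u t)") auto
  ultimately show ?thesis using n b_mono[of v \<delta>] by simp
qed

lemma xsG: "AE \<tau> in lebesgue_on {0..<S}. xs \<tau> = G xs \<tau>"
proof -
  have "AE \<tau> in lebesgue_on {0..<S}. G xs \<tau> = xs \<tau>"
    by (rule AE_mono_set[OF _ _ xs_fix]) (use r_pos in auto)
  then show ?thesis by eventually_elim simp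
qed

definition \<beta> where "\<beta> = (N R * h + M R) * \<delta> + b \<delta>"

lemma beta_nonneg: "\<beta> \<ge> 0"
  unfolding \<beta>_def using nonneg R_pos hp del b_nonneg[of \<delta>] by (intro add_nonneg_nonneg mult_nonneg_nonneg) auto

lemma apriori: "AE \<tau> in lebesgue_on {0..<S}. norm (xs \<tau>) \<le> 2 * \<beta> * exp (l * \<tau>)"
proof (rule halving[where g="\<lambda>\<tau>. norm (xs \<tau>)" and w="\<lambda>\<tau>. exp (l * \<tau>)" and ci="a R"])
  show "a R \<ge> 0" by (rule aR)
  show "\<beta> \<ge> 0" by (rule beta_nonneg)
  show "\<And>t. 0 \<le> exp (l * t)" by simp
  have A0: "AE \<tau> in lebesgue_on {-r..<S}. norm (xs \<tau> - xs \<tau>) \<le> 0 * exp (l * \<tau>)" by simp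
  show "AE \<tau> in lebesgue_on {0..<S}. norm (xs \<tau>) \<le> a R * exp (l * \<tau>)"
    using xsG AE_in
  proof eventually_elim
    case (elim \<tau>)
    then have "norm (xs \<tau>) \<le> a R"
      using G_core(2)[OF xs_meas xs_meas A0 order.refl, of \<tau>] by simp
    moreover have "1 \<le> exp (l * \<tau>)" using elim hp by simp
    then have "a R \<le> a R * exp (l * \<tau>)" using aR by (metis mult_left_mono mult.right_neutral)
    ultimately show ?case by simp
  qed
  fix c :: real assume c: "c \<ge> 0"
  assume H: "AE \<tau> in lebesgue_on {0..<S}. norm (xs \<tau>) \<le> c * exp (l * \<tau>)"
  have H': "AE \<tau> in lebesgue_on {-r..<S}. \<tau> \<in> {0..<S} \<longrightarrow> norm (xs \<tau>) \<le> c * exp (l * \<tau>)"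
    by (rule AE_sub[OF _ _ H]) auto
  have X': "AE \<tau> in lebesgue_on {-r..<S}. \<tau> \<in> {-r..<0} \<longrightarrow> norm (x0 \<tau>) \<le> \<delta>"
    by (rule AE_sub[OF _ _ x0b]) auto
  have df: "AE \<tau> in lebesgue_on {-r..<S}. norm (Pr \<rho> (xs \<tau>) - 0) \<le> \<delta> + c * exp (l * \<tau>)"
    using H' X' AE_in
  proof eventually_elim
    case (elim \<tau>)
    have ce: "0 \<le> c * exp (l * \<tau>)" using c by simp
    show ?case
    proof (cases "\<tau> < 0")
      case True
      then have "norm (Pr \<rho> (xs \<tau>)) \<le> norm (x0 \<tau>)"
        using xs_neg[OF True] by (simp add: Pr_idem[OF rho0] Pr_norm[OF rho0])
      then show ?thesis using elim True ce by simp
    next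
      case False
      then have "norm (Pr \<rho> (xs \<tau>)) \<le> norm (xs \<tau>)" by (simp add: Pr_norm[OF rho0])
      then show ?thesis using elim False del by simp
    qed
  qed
  have zm: "(\<lambda>\<tau>. 0 :: real ^ 'n) \<in> borel_measurable (lebesgue_on {-r..<S})" by simp
  have zb: "AE \<tau> in lebesgue_on {-r..<S}. norm ((\<lambda>\<tau>. 0 :: real ^ 'n) \<tau>) \<le> R" using R_pos by simp
  show "AE \<tau> in lebesgue_on {0..<S}. norm (xs \<tau>) \<le> (c / 2 + \<beta>) * exp (l * \<tau>)"
    using xsG AE_in
  proof eventually_elim
    case (elim t)
    then have t: "0 \<le> t" "t < S" by auto
    have C: "norm (f (shift (\<lambda>\<tau>. Pr \<rho> (xs \<tau>)) t) (shift d t) (shift u t) - f (shift (\<lambda>\<tau>. 0) t) (shift d t) (shift u t))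
           \<le> (N R * h + M R) * \<delta> + c / 2 * exp (l * t)"
      by (rule core(1)[OF R_pos hp(1,2,3,5,4) t Pr_meas_on[OF xs_meas] zm Prg_bnd zb df _ c inp[OF t(1)]])
         (use del in auto)
    have sh0: "shift (\<lambda>\<tau>. 0 :: real ^ 'n) t = (\<lambda>s. 0)" by (simp add: shift_def)
    have F0: "norm (f (\<lambda>s. 0) (shift d t) (shift u t)) \<le> b \<delta>" by (rule f0_bnd[OF t(1)])
    have "norm (xs t) = norm (f (shift (\<lambda>\<tau>. Pr \<rho> (xs \<tau>)) t) (shift d t) (shift u t))"
      using elim t by (simp add: G_def)
    also have "\<dots> \<le> (N R * h + M R) * \<delta> + c / 2 * exp (l * t) + b \<delta>"
      using C F0 sh0 norm_triangle_ineq2[of "f (shift (\<lambda>\<tau>. Pr \<rho> (xs \<tau>)) t) (shift d t) (shift u t)" "f (\<lambda>s. 0) (shift d t) (shift u t)"]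
      by simp
    also have "\<dots> = \<beta> + c / 2 * exp (l * t)" by (simp add: \<beta>_def)
    also have "\<dots> \<le> \<beta> * exp (l * t) + c / 2 * exp (l * t)"
    proof -
      have "1 \<le> exp (l * t)" using t hp by simp
      then have "\<beta> \<le> \<beta> * exp (l * t)" using beta_nonneg by (metis mult_left_mono mult.right_neutral)
      then show ?thesis by simp
    qed
    also have "\<dots> = (c / 2 + \<beta>) * exp (l * t)" by (simp add: algebra_simps)
    finally show ?case .
  qed
qed

lemma xs_small: "AE \<tau> in lebesgue_on {-r..<S}. norm (xs \<tau>) \<le> \<rho>"
proof -
  have H': "AE \<tau> in lebesgue_on {-r..<S}. \<tau> \<in> {0..<S} \<longrightarrow> norm (xs \<tau>) \<le> 2 * \<beta> * exp (l * \<tau>)"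
    by (rule AE_sub[OF _ _ apriori]) auto
  then show ?thesis using AE_in
  proof eventually_elim
    case (elim \<tau>)
    show ?case
    proof (cases "\<tau> < 0")
      case True then show ?thesis using xs_neg Pr_in[OF rho0] by simp
    next
      case False
      then have "norm (xs \<tau>) \<le> 2 * \<beta> * exp (l * \<tau>)" using elim by auto
      also have "\<dots> \<le> 2 * \<beta> * exp (l * S)"
        using elim hp beta_nonneg by (intro mult_left_mono) (auto intro: mult_left_mono)
      also have "\<dots> \<le> \<rho>" using beta by (simp add: \<beta>_def)
      finally show ?thesis .
    qed
  qed
qed

lemma xs_Pr: "AE \<tau> in lebesgue_on {-r..<S}. Pr \<rho> (xs \<tau>) = xs \<tau>"
  using xs_small by eventually_elim (rule Pr_self)

lemma xs_sol:
  shows "Linf_loc {-r..<S} UNIV xs"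
    and "AE t in lebesgue_on {0..<S}. xs t = f (shift xs t) (shift d t) (shift u t)"
    and "ae_eq {-r..<0} xs x0"
    and "\<And>t. 0 \<le> t \<Longrightarrow> t < S \<Longrightarrow> ess_norm {-r..<0} (shift xs t) \<le> ereal \<rho>"
proof -
  show "Linf_loc {-r..<S} UNIV xs"
    unfolding Linf_loc_def
  proof (intro conjI allI impI)
    show "xs \<in> borel_measurable (lebesgue_on {-r..<S})" by (rule xs_meas)
    show "AE t in lebesgue_on {-r..<S}. xs t \<in> UNIV" by simp
    fix a' b' assume sub: "{a'..b'} \<subseteq> {-r..<S}"
    have "xs \<in> borel_measurable (lebesgue_on {a'..b'})"
      by (rule measurable_restrict_mono[OF xs_meas sub])
    moreover have "AE \<tau> in lebesgue_on {a'..b'}. norm (xs \<tau>) \<le> \<rho>"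
      by (rule AE_mono_set[OF _ _ xs_small sub]) auto
    ultimately show "ess_norm {a'..b'} xs < \<infinity>" using ess_le ereal_le_fin by blast
  qed
  have shx: "Linf {-r..<0} UNIV (shift xs t)" "AE s in lebesgue_on {-r..<0}. norm (shift xs t s) \<le> \<rho>"
    if "0 \<le> t" "t < S" for t
    using shift_Linf[OF xs_meas xs_small that] by auto
  show "ess_norm {-r..<0} (shift xs t) \<le> ereal \<rho>" if "0 \<le> t" "t < S" for t
    by (rule ess_le[OF _ shx(2)[OF that]]) (use shx(1)[OF that] in \<open>simp add: Linf_def\<close>)
  show "ae_eq {-r..<0} xs x0"
    unfolding ae_eq_def using x0b AE_in
  proof eventually_elim
    case (elim \<tau>)
    then show ?case using xs_neg del Pr_self[of "x0 \<tau>" \<rho>] by auto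
  qed
  show "AE t in lebesgue_on {0..<S}. xs t = f (shift xs t) (shift d t) (shift u t)"
    using xsG AE_in
  proof eventually_elim
    case (elim t)
    then have t: "0 \<le> t" "t < S" by auto
    have L1: "Linf {-r..<0} UNIV (shift (\<lambda>\<tau>. Pr \<rho> (xs \<tau>)) t)"
      using shift_Linf(1)[OF Pr_meas_on[OF xs_meas] Prg_bnd t] .
    have "AE s in lebesgue_on {-r..<0}. t + s \<in> {-r..<S} \<longrightarrow> Pr \<rho> (xs (t + s)) = xs (t + s)"
      by (rule AE_shift[OF _ _ xs_Pr]) auto
    then have ae: "ae_eq {-r..<0} (shift (\<lambda>\<tau>. Pr \<rho> (xs \<tau>)) t) (shift xs t)"
      unfolding ae_eq_def using AE_in
    proof eventually_elim
      case (elim s) then show ?case using t by (auto simp: shift_def)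
    qed
    have "f (shift (\<lambda>\<tau>. Pr \<rho> (xs \<tau>)) t) (shift d t) (shift u t) = f (shift xs t) (shift d t) (shift u t)"
      by (rule f_welldef[OF L1 shx(1)[OF t] inp(1)[OF t(1)] inp(1)[OF t(1)] inp(2)[OF t(1)] inp(2)[OF t(1)] ae])
         (simp_all add: ae_eq_def)
    then show ?case using elim t by (simp add: G_def)
  qed
qed

end


theorem theorem2p2:
  fixes r :: real
    and D :: "(real ^ 'm1) set" and U :: "(real ^ 'm2) set"
    and f :: "(real \<Rightarrow> real ^ 'n) \<Rightarrow> (real \<Rightarrow> real ^ 'm1) \<Rightarrow> (real \<Rightarrow> real ^ 'm2) \<Rightarrow> real ^ 'n"
  assumes r_pos: "r > 0"
    and D_compact: "compact D"
    and U_lc: "locally compact U"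
    and U0: "0 \<in> U"
    and f_welldef: "\<And>x x' d d' u u'.
        Linf {-r..<0} UNIV x \<Longrightarrow> Linf {-r..<0} UNIV x' \<Longrightarrow>
        Linf {-r..0} D d \<Longrightarrow> Linf {-r..0} D d' \<Longrightarrow>
        Linf {-r..0} U u \<Longrightarrow> Linf {-r..0} U u' \<Longrightarrow>
        ae_eq {-r..<0} x x' \<Longrightarrow> ae_eq {-r..0} d d' \<Longrightarrow> ae_eq {-r..0} u u' \<Longrightarrow>
        f x d u = f x' d' u'"
    and H1: "\<exists>a M N :: real \<Rightarrow> real.
        mono_on {0..} a \<and> mono_on {0..} M \<and> mono_on {0..} N \<and>
        (\<forall>s\<ge>0. a s \<ge> 0 \<and> M s \<ge> 0 \<and> N s \<ge> 0) \<and>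
        (\<forall>R>0. \<forall>x y d u.
          Linf {-r..<0} UNIV x \<and> Linf {-r..<0} UNIV y \<and> Linf {-r..0} D d \<and> Linf {-r..0} U u \<and>
          ess_norm {-r..<0} x \<le> ereal R \<and> ess_norm {-r..<0} y \<le> ereal R \<and>
          ess_norm {-r..0} (\<lambda>s. (d s, u s)) \<le> ereal R \<longrightarrow>
            (\<forall>h. 0 < h \<and> h < r \<longrightarrow>
               ereal (norm (f x d u - f y d u))
                 \<le> ereal (N R * h) * ess_norm {-h..<0} (\<lambda>s. x s - y s)
                   + ereal (M R) * ess_norm {-r..<-h} (\<lambda>s. x s - y s)) \<and>
            norm (f x d u) \<le> a R)"
    and H2: "\<And>\<delta> x d u. \<delta> > 0 \<Longrightarrow> Linf {-r..<\<delta>} UNIV x \<Longrightarrow>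
        Linf {-r..\<delta>} D d \<Longrightarrow> Linf {-r..\<delta>} U u \<Longrightarrow>
        Linf {-r..<\<delta>} UNIV
          (\<lambda>t. if t < 0 then x t else f (shift x t) (shift d t) (shift u t))"
    and H3: "\<exists>b. K_inf b \<and>
        (\<forall>x d u. Linf {-r..<0} UNIV x \<and> Linf {-r..0} D d \<and> Linf {-r..0} U u \<longrightarrow>
           norm (f x d u)
             \<le> b (real_of_ereal (max (ess_norm {-r..<0} x) (ess_norm {-r..0} u))))"
  shows "\<forall>\<epsilon>>0. \<forall>T\<ge>0. \<exists>\<delta>>0. \<forall>x0 d u.
     Linf {-r..<0} UNIV x0 \<and> Linf {-r..} D d \<and> Linf_loc {-r..} U u \<and>
     ess_norm {-r..<0} x0 + (SUP t\<in>{0..}. ess_norm {-r..0} (shift u t)) < ereal \<delta> \<longrightarrow>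
     (\<exists>tmax :: ereal. tmax > ereal T \<and>
        (\<exists>x. Linf_loc {t. -r \<le> t \<and> ereal t < tmax} UNIV x \<and>
             (AE t in lebesgue_on {t. 0 \<le> t \<and> ereal t < tmax}.
                x t = f (shift x t) (shift d t) (shift u t)) \<and>
             ae_eq {-r..<0} x x0 \<and>
             (\<forall>t\<in>{0..T}. ess_norm {-r..<0} (shift x t) < ereal \<epsilon>) \<and>
             (\<forall>y. Linf_loc {t. -r \<le> t \<and> ereal t < tmax} UNIV y \<and>
                  (AE t in lebesgue_on {t. 0 \<le> t \<and> ereal t < tmax}.
                     y t = f (shift y t) (shift d t) (shift u t)) \<and>
                  ae_eq {-r..<0} y x0 \<longrightarrow>
                  ae_eq {t. -r \<le> t \<and> ereal t < tmax} y x)))"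
proof -
  obtain a M N :: "real \<Rightarrow> real" where
    aMN: "\<forall>s\<ge>0. a s \<ge> 0 \<and> M s \<ge> 0 \<and> N s \<ge> 0"
    and H1': "\<forall>R>0. \<forall>x y d u.
          Linf {-r..<0} UNIV x \<and> Linf {-r..<0} UNIV y \<and> Linf {-r..0} D d \<and> Linf {-r..0} U u \<and>
          ess_norm {-r..<0} x \<le> ereal R \<and> ess_norm {-r..<0} y \<le> ereal R \<and>
          ess_norm {-r..0} (\<lambda>s. (d s, u s)) \<le> ereal R \<longrightarrow>
            (\<forall>h. 0 < h \<and> h < r \<longrightarrow>
               ereal (norm (f x d u - f y d u))
                 \<le> ereal (N R * h) * ess_norm {-h..<0} (\<lambda>s. x s - y s)
                   + ereal (M R) * ess_norm {-r..<-h} (\<lambda>s. x s - y s)) \<and>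
            norm (f x d u) \<le> a R"
    using H1 by blast
  obtain b where Kb: "K_inf b" and H3': "\<forall>x d u. Linf {-r..<0} UNIV x \<and> Linf {-r..0} D d \<and> Linf {-r..0} U u \<longrightarrow>
           norm (f x d u)
             \<le> b (real_of_ereal (max (ess_norm {-r..<0} x) (ess_norm {-r..0} u)))"
    using H3 by blast
  interpret sys r D U f a M N b
    by (rule sys.intro) (use r_pos D_compact compact_imp_bounded f_welldef aMN H1' H2 Kb H3' in auto)
  show ?thesis
  proof (intro allI impI)
    fix \<epsilon> T :: real assume eps: "\<epsilon> > 0" and T: "T \<ge> 0"
    define S where "S = T + 1"
    have S: "S > 0" "T < S" using T by (auto simp: S_def)
    obtain Dm0 where Dm0: "\<forall>v\<in>D. norm v \<le> Dm0" using D_bdd bounded_iff by blast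
    define Dm where "Dm = max 0 Dm0"
    have Dm: "\<forall>v\<in>D. norm v \<le> Dm" "Dm \<ge> 0" using Dm0 by (auto simp: Dm_def intro: le_max_iff_disj[THEN iffD2])
    define \<rho> where "\<rho> = \<epsilon> / 2"
    have rho: "\<rho> > 0" "\<rho> < \<epsilon>" using eps by (auto simp: \<rho>_def)
    define R where "R = \<rho> + Dm + 1"
    have R: "R > 0" using rho Dm by (simp add: R_def)
    obtain h l where hp: "0 < h" "h < r" "N R * h \<le> 1/4" "l \<ge> 0" "M R * exp (- (l * h)) \<le> 1/4"
      using params[OF R] by blast
    define E where "E = exp (l * S)"
    have E: "E > 0" by (simp add: E_def)
    define K where "K = N R * h + M R"
    have K: "K \<ge> 0" using nonneg R hp by (simp add: K_def)
    have "continuous_on {0..} b" using Kb by (simp add: K_inf_def)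
    then have C: "\<forall>x\<in>{0..}. \<forall>e>0. \<exists>d>0. \<forall>x'\<in>{0..}. dist x' x < d \<longrightarrow> dist (b x') (b x) < e"
      unfolding continuous_on_iff by blast
    have "(0::real) \<in> {0..}" by simp
    then have "\<forall>e>0. \<exists>d>0. \<forall>x'\<in>{0..}. dist x' 0 < d \<longrightarrow> dist (b x') (b 0) < e"
      using C by blast
    moreover have "\<rho> / (4 * E) > 0" using rho E by simp
    ultimately obtain \<delta>1 where d1: "\<delta>1 > 0" "\<forall>x'\<in>{0..}. dist x' 0 < \<delta>1 \<longrightarrow> dist (b x') (b 0) < \<rho> / (4 * E)"
      by blast
    define \<delta> where "\<delta> = min (\<delta>1 / 2) (min 1 (min \<rho> (\<rho> / (4 * E * (K + 1)))))"
    have del: "\<delta> > 0" "\<delta> \<le> 1" "\<delta> \<le> \<rho>" "\<delta> < \<delta>1" "\<delta> \<le> \<rho> / (4 * E * (K + 1))"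
      using d1 rho E K by (auto simp: \<delta>_def)
    have b0: "b 0 = 0" using Kb by (simp add: K_inf_def)
    have bd: "b \<delta> < \<rho> / (4 * E)"
      using d1(2)[rule_format, of \<delta>] del b0 by (auto simp: dist_real_def)
    have Kd: "K * \<delta> \<le> \<rho> / (4 * E)"
    proof -
      have "K * \<delta> \<le> K * (\<rho> / (4 * E * (K + 1)))" using K del by (intro mult_left_mono) auto
      also have "\<dots> = (\<rho> / (4 * E)) * (K / (K + 1))" using K by (simp add: field_simps)
      also have "\<dots> \<le> (\<rho> / (4 * E)) * 1" using K rho E by (intro mult_left_mono) auto
      finally show ?thesis by simp
    qed
    have beta: "2 * ((N R * h + M R) * \<delta> + b \<delta>) * exp (l * S) \<le> \<rho>"
    proof -
      have "(N R * h + M R) * \<delta> + b \<delta> \<le> \<rho> / (2 * E)"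
        using Kd bd by (simp add: K_def field_simps)
      then have "2 * ((N R * h + M R) * \<delta> + b \<delta>) * E \<le> 2 * (\<rho> / (2 * E)) * E"
        using E by (intro mult_right_mono) auto
      also have "\<dots> = \<rho>" using E by simp
      finally show ?thesis by (simp add: E_def)
    qed
    show "\<exists>\<delta>>0. \<forall>x0 d u.
     Linf {-r..<0} UNIV x0 \<and> Linf {-r..} D d \<and> Linf_loc {-r..} U u \<and>
     ess_norm {-r..<0} x0 + (SUP t\<in>{0..}. ess_norm {-r..0} (shift u t)) < ereal \<delta> \<longrightarrow>
     (\<exists>tmax :: ereal. tmax > ereal T \<and>
        (\<exists>x. Linf_loc {t. -r \<le> t \<and> ereal t < tmax} UNIV x \<and>
             (AE t in lebesgue_on {t. 0 \<le> t \<and> ereal t < tmax}.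
                x t = f (shift x t) (shift d t) (shift u t)) \<and>
             ae_eq {-r..<0} x x0 \<and>
             (\<forall>t\<in>{0..T}. ess_norm {-r..<0} (shift x t) < ereal \<epsilon>) \<and>
             (\<forall>y. Linf_loc {t. -r \<le> t \<and> ereal t < tmax} UNIV y \<and>
                  (AE t in lebesgue_on {t. 0 \<le> t \<and> ereal t < tmax}.
                     y t = f (shift y t) (shift d t) (shift u t)) \<and>
                  ae_eq {-r..<0} y x0 \<longrightarrow>
                  ae_eq {t. -r \<le> t \<and> ereal t < tmax} y x)))"
    proof (intro exI[of _ \<delta>] conjI allI impI)
      show "\<delta> > 0" by (rule del(1))
      fix x0 :: "real \<Rightarrow> real ^ 'n" and d :: "real \<Rightarrow> real ^ 'm1" and u :: "real \<Rightarrow> real ^ 'm2"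
      assume A: "Linf {-r..<0} UNIV x0 \<and> Linf {-r..} D d \<and> Linf_loc {-r..} U u \<and>
        ess_norm {-r..<0} x0 + (SUP t\<in>{0..}. ess_norm {-r..0} (shift u t)) < ereal \<delta>"
      then have x0: "Linf {-r..<0} UNIV x0" and d: "Linf {-r..} D d" and u: "Linf_loc {-r..} U u"
        and sm: "ess_norm {-r..<0} x0 + (SUP t\<in>{0..}. ess_norm {-r..0} (shift u t)) < ereal \<delta>"
        by auto
      define Su where "Su = (SUP t\<in>{0..}. ess_norm {-r..0} (shift u t))"
      have uS: "ess_norm {-r..0} (shift u t) \<le> Su" if "t \<ge> 0" for t
        unfolding Su_def by (rule SUP_upper) (use that in auto)
      have u00: "0 \<le> ess_norm {-r..0} (shift u 0)"
        by (rule ess_nonneg) (use emeas_Icc_ne r_pos in auto)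
      have Su0: "0 \<le> Su" using u00 uS[of 0] by simp
      have x00: "0 \<le> ess_norm {-r..<0} x0"
        by (rule ess_nonneg) (use emeas_Ico_ne r_pos in auto)
      have "ess_norm {-r..<0} x0 \<le> ess_norm {-r..<0} x0 + Su" using Su0 by (simp add: add_increasing2)
      then have x0d: "ess_norm {-r..<0} x0 \<le> ereal \<delta>" using sm unfolding Su_def[symmetric] by simp
      have "Su \<le> ess_norm {-r..<0} x0 + Su" using x00 by (simp add: add_increasing)
      then have "Su \<le> ereal \<delta>" using sm unfolding Su_def[symmetric] by simp
      then have ub: "\<forall>t\<ge>0. ess_norm {-r..0} (shift u t) \<le> ereal \<delta>" using uS order.trans by blast
      have x0b: "AE s in lebesgue_on {-r..<0}. norm (x0 s) \<le> \<delta>" by (rule ess_AE_le[OF x0d])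
      interpret s2: sys2 r D U f a M N b x0 d u \<rho> \<delta> Dm R h l S
        by (intro sys2.intro sys2_axioms.intro)
           (use sys_axioms rho del R Dm hp S x0 x0b d u ub beta in \<open>auto simp: R_def\<close>)
      have set1: "{t. -r \<le> t \<and> ereal t < ereal S} = {-r..<S}" by auto
      have set2: "{t. 0 \<le> t \<and> ereal t < ereal S} = {0..<S}" by auto
      show "\<exists>tmax :: ereal. tmax > ereal T \<and>
        (\<exists>x. Linf_loc {t. -r \<le> t \<and> ereal t < tmax} UNIV x \<and>
             (AE t in lebesgue_on {t. 0 \<le> t \<and> ereal t < tmax}.
                x t = f (shift x t) (shift d t) (shift u t)) \<and>
             ae_eq {-r..<0} x x0 \<and>
             (\<forall>t\<in>{0..T}. ess_norm {-r..<0} (shift x t) < ereal \<epsilon>) \<and>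
             (\<forall>y. Linf_loc {t. -r \<le> t \<and> ereal t < tmax} UNIV y \<and>
                  (AE t in lebesgue_on {t. 0 \<le> t \<and> ereal t < tmax}.
                     y t = f (shift y t) (shift d t) (shift u t)) \<and>
                  ae_eq {-r..<0} y x0 \<longrightarrow>
                  ae_eq {t. -r \<le> t \<and> ereal t < tmax} y x))"
      proof (intro exI[of _ "ereal S"] conjI exI[of _ s2.xs] ballI allI impI)
        show "ereal T < ereal S" using S by simp
        show "Linf_loc {t. -r \<le> t \<and> ereal t < ereal S} UNIV s2.xs" unfolding set1 by (rule s2.xs_sol(1))
        show "AE t in lebesgue_on {t. 0 \<le> t \<and> ereal t < ereal S}. s2.xs t = f (shift s2.xs t) (shift d t) (shift u t)"
          unfolding set2 by (rule s2.xs_sol(2))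
        show "ae_eq {-r..<0} s2.xs x0" by (rule s2.xs_sol(3))
        fix t assume t: "t \<in> {0..T}"
        have "ess_norm {-r..<0} (shift s2.xs t) \<le> ereal \<rho>" by (rule s2.xs_sol(4)) (use t S in auto)
        then show "ess_norm {-r..<0} (shift s2.xs t) < ereal \<epsilon>" using rho by (simp add: le_less_trans)
      next
        fix y :: "real \<Rightarrow> real ^ 'n"
        assume Y: "Linf_loc {t. -r \<le> t \<and> ereal t < ereal S} UNIV y \<and>
                  (AE t in lebesgue_on {t. 0 \<le> t \<and> ereal t < ereal S}.
                     y t = f (shift y t) (shift d t) (shift u t)) \<and>
                  ae_eq {-r..<0} y x0"
        have inps: "Linf {-r..0} D (shift d t) \<and> Linf {-r..0} U (shift u t) \<and>
                 (AE s in lebesgue_on {-r..0}. norm (shift d t s, shift u t s) \<le> Dm + \<delta>)" if "0 \<le> t" for t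
          using inputs[OF d u Dm(1) that, of \<delta>] ub that by auto
        have Y1: "Linf_loc {-r..<S} UNIV y" using Y unfolding set1 by blast
        have Y2: "AE t in lebesgue_on {0..<S}. y t = f (shift y t) (shift d t) (shift u t)"
          using Y unfolding set2 by blast
        have Y3: "ae_eq {-r..<0} y x0" using Y by blast
        show "ae_eq {t. -r \<le> t \<and> ereal t < ereal S} y s2.xs"
          unfolding set1
          by (rule uniq[OF S(1) _ inps Y1 s2.xs_sol(1) Y2 s2.xs_sol(2) Y3 s2.xs_sol(3)])
             (use Dm del in auto)
      qed
    qed
  qed
qed

end
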